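(* Let $\Gamma=\mathsf{PSL}_2(\mathbb{Z})=\langle U,S\mid U^3,S^2\rangle$, with $U$ of order $3$ and $S$ of order $2$. Call a word over $\{U,S\}$ an $\mathbf a$-word if it equals the identity in $\Gamma$, contains no factor $SS$, and has the form $SUBUS$ with $B$ a nonempty word over $\{U,S\}$. Call an $\mathbf a$-word primitive if it cannot be written as $A_1U^{\alpha_1}A_2U^{\alpha_2}\cdots U^{\alpha_{s-1}}A_s$ with $s\ge2$, all $\alpha_i\ge1$, and each $A_i$ an $\mathbf a$-word. For $n,m\ge0$ let $a(n,m)$ (resp. $\mathfrak a(n,m)$) be the number of $\mathbf a$-words (resp. primitive $\mathbf a$-words) with exactly $n$ letters $U$ and $m$ letters $S$. Then for all $n,m\ge0$, $$a(3n,2m)=\mathfrak a(3n,2m)+\sum_{k\ge1}\sum_{s\ge2}\binom{3k-1}{s-2}\sum_{\substack{n_1+\cdots+n_s=n-k\\ m_1+\cdots+m_s=m\\ n_i,m_i\ge0}}\prod_{i=1}^{s}\mathfrak a(3n_i,2m_i).$$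
   Context: Words are finite sequences over $\{U,S\}$ read as products in $\Gamma$; $U^\alpha$ denotes $\alpha$ consecutive letters $U$. The binomial coefficient $\binom{3k-1}{s-2}$ is zero when $s-2>3k-1$. *)

theory Defs
  imports Main
begin

datatype letter = U | S

(* 2x2 integer matrices (a,b,c,d) = [[a,b],[c,d]] *)
type_synonym mat2 = "int \<times> int \<times> int \<times> int"

fun mmul :: "mat2 \<Rightarrow> mat2 \<Rightarrow> mat2" where
  "mmul (a,b,c,d) (e,f,g,h) = (a*e + b*g, a*f + b*h, c*e + d*g, c*f + d*h)"

(* Generators of PSL_2(Z) = <U,S | U^3, S^2>, as matrices in SL_2(Z):
   S = [[0,-1],[1,0]],  U = [[0,-1],[1,1]]  (U^3 = S^2 = -I) *)
fun letter_mat :: "letter \<Rightarrow> mat2" where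
  "letter_mat S = (0, -1, 1, 0)"
| "letter_mat U = (0, -1, 1, 1)"

definition word_mat :: "letter list \<Rightarrow> mat2" where
  "word_mat w = foldr (\<lambda>x M. mmul (letter_mat x) M) w (1, 0, 0, 1)"

(* a word equals the identity in PSL_2(Z) = SL_2(Z)/{\<plusminus>I} *)
definition is_identity :: "letter list \<Rightarrow> bool" where
  "is_identity w \<longleftrightarrow> word_mat w = (1,0,0,1) \<or> word_mat w = (-1,0,0,-1)"

definition no_SS :: "letter list \<Rightarrow> bool" where
  "no_SS w \<longleftrightarrow> (\<forall>i. Suc i < length w \<longrightarrow> \<not> (w ! i = S \<and> w ! Suc i = S))"

definition a_word :: "letter list \<Rightarrow> bool" where
  "a_word w \<longleftrightarrow> is_identity w \<and> no_SS w \<and>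
     (\<exists>B. B \<noteq> [] \<and> w = [S, U] @ B @ [U, S])"

fun join :: "letter list list \<Rightarrow> nat list \<Rightarrow> letter list" where
  "join [] _ = []"
| "join [A] _ = A"
| "join (A # As) [] = A @ join As []"
| "join (A # As) (\<alpha> # \<alpha>s) = A @ replicate \<alpha> U @ join As \<alpha>s"

definition primitive_a_word :: "letter list \<Rightarrow> bool" where
  "primitive_a_word w \<longleftrightarrow> a_word w \<and>
     \<not> (\<exists>As \<alpha>s. length As \<ge> 2 \<and> length \<alpha>s = length As - 1 \<and>
              (\<forall>\<alpha>\<in>set \<alpha>s. \<alpha> \<ge> 1) \<and> (\<forall>A\<in>set As. a_word A) \<and>
              w = join As \<alpha>s)"

definition a_count :: "nat \<Rightarrow> nat \<Rightarrow> nat" where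
  "a_count n m = card {w. a_word w \<and> count_list w U = n \<and> count_list w S = m}"

definition pa_count :: "nat \<Rightarrow> nat \<Rightarrow> nat" where
  "pa_count n m = card {w. primitive_a_word w \<and> count_list w U = n \<and> count_list w S = m}"

end

theory Submission
  imports Defs
begin


definition I2 :: mat2 where "I2 = (1,0,0,1)"
definition Sm :: mat2 where "Sm = (0,-1,1,0)"
fun neg :: "mat2 \<Rightarrow> mat2" where "neg (a,b,c,d) = (-a,-b,-c,-d)"

lemma mmul_assoc: "mmul (mmul A B) C = mmul A (mmul B C)"
  by (cases A; cases B; cases C) (simp add: algebra_simps)
lemma mmul_I1[simp]: "mmul I2 A = A" by (cases A) (simp add: I2_def)
lemma mmul_I2[simp]: "mmul A I2 = A" by (cases A) (simp add: I2_def)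
lemma neg_neg[simp]: "neg (neg A) = A" by (cases A) simp
lemma mmul_neg1[simp]: "mmul (neg A) B = neg (mmul A B)" by (cases A; cases B) simp
lemma mmul_neg2[simp]: "mmul A (neg B) = neg (mmul A B)" by (cases A; cases B) simp

lemma word_mat_Nil[simp]: "word_mat [] = I2" by (simp add: word_mat_def I2_def)
lemma word_mat_Cons[simp]: "word_mat (x#xs) = mmul (letter_mat x) (word_mat xs)"
  by (simp add: word_mat_def)
lemma word_mat_append[simp]: "word_mat (xs@ys) = mmul (word_mat xs) (word_mat ys)"
  by (induction xs) (simp_all add: mmul_assoc)
lemma letter_S[simp]: "letter_mat S = Sm" by (simp add: Sm_def)

definition upow :: "nat \<Rightarrow> mat2" where "upow n = word_mat (replicate n U)"

lemma upow_add: "upow (a+b) = mmul (upow a) (upow b)"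
  by (simp add: upow_def replicate_add)
lemma upow_0[simp]: "upow 0 = I2" by (simp add: upow_def)
lemma upow_Suc: "upow (Suc n) = mmul (0,-1,1,1) (upow n)" by (simp add: upow_def)
lemma upow_3: "upow 3 = neg I2" by (simp add: upow_def numeral_eq_Suc I2_def)
lemma upow_6: "upow 6 = I2" by (simp add: upow_def numeral_eq_Suc I2_def)
lemma upow_mod6: "upow n = upow (n mod 6)"
proof -
  have "upow (6*q + r) = upow r" for q r
    by (induction q) (simp_all add: upow_add upow_6 add.assoc)
  then show ?thesis by (metis mod_mult_div_eq add.commute)
qed
lemma upow_vals: "upow 0 = (1,0,0,1)" "upow 1 = (0,-1,1,1)" "upow 2 = (-1,-1,1,0)"
  "upow 3 = (-1,0,0,-1)" "upow 4 = (0,1,-1,-1)" "upow 5 = (1,1,-1,0)"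
  by (simp_all add: upow_def numeral_eq_Suc I2_def)

lemma upow_eq_iff: "upow a = upow b \<longleftrightarrow> a mod 6 = b mod 6"
proof -
  have "\<And>x y. x < 6 \<Longrightarrow> y < 6 \<Longrightarrow> upow x = upow y \<Longrightarrow> x = y"
  proof -
    fix x y :: nat assume "x < 6" "y < 6" "upow x = upow y"
    then show "x = y"
    proof -
      have "x \<in> {0,1,2,3,4,5}" "y \<in> {0,1,2,3,4,5}" using \<open>x<6\<close> \<open>y<6\<close> by auto
      then show ?thesis using \<open>upow x = upow y\<close> by (auto simp add: upow_vals upow_vals(2)[unfolded One_nat_def] I2_def del: upow_0)
    qed
  qed
  then show ?thesis by (metis upow_mod6 mod_less_divisor zero_less_numeral)
qed

lemma neg_upow: "neg (upow a) = upow (a+3)"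
  by (simp add: upow_add upow_3 I2_def) (cases "upow a", simp)

lemma upow_6a: "upow (6*a) = I2" by (subst upow_mod6) simp

lemma upow_cancel_left: "mmul (upow a) X = upow c \<Longrightarrow> X = upow (c + 5*a)"
proof -
  assume h: "mmul (upow a) X = upow c"
  have "X = mmul (upow (5*a + a)) X" by (simp add: upow_6a[of a, simplified])
  also have "\<dots> = mmul (upow (5*a)) (upow c)" by (simp only: upow_add[of "5*a" a] mmul_assoc h)
  also have "\<dots> = upow (c + 5*a)" by (simp add: upow_add[symmetric] add.commute)
  finally show ?thesis .
qed

lemma upow_comm: "mmul (upow a) (upow b) = mmul (upow b) (upow a)"
  by (metis upow_add add.commute)

lemma upow_cancel_right: "mmul X (upow a) = upow c \<Longrightarrow> X = upow (c + 5*a)"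
proof -
  assume h: "mmul X (upow a) = upow c"
  have "X = mmul X (upow (a + 5*a))" by (simp add: upow_6a[of a, simplified])
  also have "\<dots> = mmul (upow c) (upow (5*a))" by (simp only: upow_add[of a "5*a"] mmul_assoc[symmetric] h)
  also have "\<dots> = upow (c + 5*a)" by (simp add: upow_add)
  finally show ?thesis .
qed

definition inU :: "mat2 \<Rightarrow> bool" where "inU M \<longleftrightarrow> (\<exists>c. M = upow c)"
definition peq :: "mat2 \<Rightarrow> mat2 \<Rightarrow> bool" where "peq A B \<longleftrightarrow> A = B \<or> A = neg B"

lemma inU_neg[simp]: "inU (neg M) \<longleftrightarrow> inU M"
  unfolding inU_def by (metis neg_neg neg_upow)
lemma peq_inU: "peq A B \<Longrightarrow> inU A \<longleftrightarrow> inU B"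
  unfolding peq_def by auto
lemma peq_upow: "peq A B \<Longrightarrow> A = upow c \<Longrightarrow> \<exists>c'. B = upow c' \<and> c' mod 3 = c mod 3"
  unfolding peq_def
  by (metis add.commute mod_add_self2 neg_neg neg_upow)
lemma peq_refl[simp]: "peq A A" by (simp add: peq_def)
lemma peq_sym: "peq A B \<Longrightarrow> peq B A" by (auto simp: peq_def)
lemma peq_trans: "peq A B \<Longrightarrow> peq B C \<Longrightarrow> peq A C" by (auto simp: peq_def)
lemma peq_mmul: "peq A B \<Longrightarrow> peq C D \<Longrightarrow> peq (mmul A C) (mmul B D)"
  by (auto simp: peq_def)
lemma peq_upow3: "a mod 3 = 0 \<Longrightarrow> peq (upow a) I2"
proof -
  assume "a mod 3 = 0"
  then have "a mod 6 = 0 \<or> a mod 6 = 3" by presburger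
  then show ?thesis
    by (metis upow_mod6 upow_0 upow_3 peq_def)
qed
lemma SS: "mmul Sm Sm = neg I2" by (simp add: Sm_def I2_def)
lemma SuS: "a mod 3 = 0 \<Longrightarrow> peq (mmul Sm (mmul (upow a) Sm)) I2"
proof -
  assume "a mod 3 = 0"
  then have "peq (mmul Sm (mmul (upow a) Sm)) (mmul Sm (mmul I2 Sm))"
    by (intro peq_mmul peq_upow3) auto
  then show ?thesis by (auto simp: SS peq_def)
qed
lemma inU_iff_peq: "peq I2 A \<Longrightarrow> inU A" unfolding peq_def inU_def
  by (metis neg_neg upow_0 upow_3)


definition wtail :: "nat list \<Rightarrow> letter list" where
  "wtail as = concat (map (\<lambda>a. replicate a U @ [S]) as)"
definition wexp :: "nat list \<Rightarrow> letter list" where "wexp as = S # wtail as"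
definition wm :: "nat list \<Rightarrow> mat2" where "wm as = word_mat (wexp as)"

lemma wtail_Nil[simp]: "wtail [] = []" by (simp add: wtail_def)
lemma wtail_Cons: "wtail (a#as) = replicate a U @ S # wtail as" by (simp add: wtail_def)
lemma wtail_append: "wtail (as@bs) = wtail as @ wtail bs" by (simp add: wtail_def)
lemma wexp_append: "wexp (as@bs) = wexp as @ wtail bs" by (simp add: wexp_def wtail_append)
lemma wm_Nil[simp]: "wm [] = Sm" by (simp add: wm_def wexp_def Sm_def I2_def)
lemma wexp_Cons: "wexp (a#as) = S # replicate a U @ wexp as" by (simp add: wexp_def wtail_Cons)
lemma wm_Cons: "wm (a#as) = mmul Sm (mmul (upow a) (wm as))"
  by (simp add: wm_def wexp_Cons upow_def Sm_def)
lemma wt_Cons: "word_mat (wtail (a#as)) = mmul (upow a) (mmul Sm (word_mat (wtail as)))"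
  by (simp add: wtail_Cons upow_def Sm_def)
lemma wm_append: "wm (as@bs) = mmul (wm as) (word_mat (wtail bs))"
  by (simp add: wm_def wexp_append)

declare peq_trans[trans]

fun nn :: "mat2 \<Rightarrow> bool" where "nn (a,b,c,d) \<longleftrightarrow> a \<ge> 0 \<and> b \<ge> 0 \<and> c \<ge> 0 \<and> d \<ge> 0"

lemma nn_mmul: "nn A \<Longrightarrow> nn B \<Longrightarrow> nn (mmul A B)"
  by (cases A; cases B) simp

lemma SU_cases: "a mod 3 \<noteq> 0 \<Longrightarrow> peq (mmul Sm (upow a)) (1,1,0,1) \<or> peq (mmul Sm (upow a)) (1,0,1,1)"
proof -
  assume "a mod 3 \<noteq> 0"
  then have "a mod 6 = 1 \<or> a mod 6 = 2 \<or> a mod 6 = 4 \<or> a mod 6 = 5" by presburger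
  then show ?thesis
    unfolding upow_mod6[of a] by (auto simp: upow_vals upow_vals(2)[unfolded One_nat_def] Sm_def peq_def)
qed

lemma SU_nn: "a mod 3 \<noteq> 0 \<Longrightarrow> \<exists>M. nn M \<and> peq (mmul Sm (upow a)) M"
proof -
  assume "a mod 3 \<noteq> 0"
  moreover have "nn (1,1,0,1)" "nn (1,0,1,1)" by simp_all
  ultimately show ?thesis using SU_cases by blast
qed

lemma reduced: "\<forall>a\<in>set as. a mod 3 \<noteq> 0 \<Longrightarrow> \<exists>M. nn M \<and> peq (wm as) (mmul M Sm)"
proof (induction as)
  case Nil
  then show ?case by (intro exI[of _ I2]) (simp add: I2_def Sm_def)
next
  case (Cons a as)
  then obtain M where M: "nn M" "peq (wm as) (mmul M Sm)" by (meson list.set_intros(2))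
  have "a mod 3 \<noteq> 0" using Cons.prems by simp
  then obtain N where N: "nn N" "peq (mmul Sm (upow a)) N" using SU_nn by blast
  have "peq (wm (a#as)) (mmul (mmul Sm (upow a)) (wm as))" by (simp add: wm_Cons mmul_assoc)
  also have "peq \<dots> (mmul N (mmul M Sm))" by (rule peq_mmul[OF N(2) M(2)])
  finally have "peq (wm (a # as)) (mmul (mmul N M) Sm)"
    by (simp add: mmul_assoc)
  then show ?case using nn_mmul[OF N(1) M(1)] by blast
qed

lemma not_inU_red: "nn M \<Longrightarrow> \<not> inU (mmul M Sm)"
proof
  assume "nn M" "inU (mmul M Sm)"
  then obtain c where c: "mmul M Sm = upow (c mod 6)" unfolding inU_def by (metis upow_mod6)
  have "c mod 6 \<in> {0,1,2,3,4,5}" by auto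
  then show False using c \<open>nn M\<close>
    by (cases M) (auto simp: upow_vals upow_vals(2)[unfolded One_nat_def] Sm_def I2_def)
qed

lemma not_inU_all: "\<forall>a\<in>set as. a mod 3 \<noteq> 0 \<Longrightarrow> \<not> inU (wm as)"
  using reduced not_inU_red peq_inU by blast

lemma SuSZ: "a mod 3 = 0 \<Longrightarrow> peq (mmul Sm (mmul (upow a) (mmul Sm Z))) Z"
proof -
  assume a: "a mod 3 = 0"
  have "mmul Sm (mmul (upow a) (mmul Sm Z)) = mmul (mmul Sm (mmul (upow a) Sm)) Z"
    by (simp add: mmul_assoc)
  moreover have "peq (mmul (mmul Sm (mmul (upow a) Sm)) Z) (mmul I2 Z)"
    by (rule peq_mmul[OF SuS[OF a] peq_refl])
  ultimately show ?thesis by simp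
qed

lemma merge: "a mod 3 = 0 \<Longrightarrow> peq (wm (pre @ x # a # y # post)) (wm (pre @ (x+y) # post))"
proof -
  assume a: "a mod 3 = 0"
  have "peq (word_mat (wtail (x # a # y # post))) (word_mat (wtail ((x+y) # post)))"
    unfolding wt_Cons upow_add mmul_assoc
    by (rule peq_mmul[OF peq_refl SuSZ[OF a]])
  then show ?thesis unfolding wm_append by (rule peq_mmul[OF peq_refl])
qed

lemma case_first: "a mod 3 = 0 \<Longrightarrow> peq (wm (a # y # post)) (mmul (upow y) (wm post))"
  unfolding wm_Cons by (rule SuSZ)

lemma case_last: "a mod 3 = 0 \<Longrightarrow> peq (wm (pre @ [x, a])) (mmul (wm pre) (upow x))"
proof -
  assume a: "a mod 3 = 0"
  have "peq (word_mat (wtail [x,a])) (mmul (upow x) I2)"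
    unfolding wt_Cons by (rule peq_mmul[OF peq_refl]) (simp add: SuSZ[OF a, of I2, simplified])
  then show ?thesis unfolding wm_append by (simp add: peq_mmul)
qed

lemma case_single: "a mod 3 = 0 \<Longrightarrow> peq (wm [a]) I2"
  using SuSZ[of a I2] by (simp add: wm_Cons)

lemma zero_split: "\<not> (\<forall>a\<in>set as. a mod 3 \<noteq> 0) \<Longrightarrow>
   \<exists>pre a post. as = pre @ a # post \<and> a mod 3 = 0"
  by (metis split_list)


lemma peq_upow_mod: "peq (upow c) B \<Longrightarrow> \<exists>c'. B = upow c' \<and> c' mod 3 = c mod 3"
  using peq_upow by blast

lemma I2_upow_mod: "I2 = upow c \<Longrightarrow> c mod 3 = 0"
proof -
  assume "I2 = upow c"
  then have "c mod 6 = 0" using upow_eq_iff[of 0 c] by simp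
  then show ?thesis by presburger
qed

lemma modeq_add: "(x::nat) mod 3 = x' mod 3 \<Longrightarrow> y mod 3 = y' mod 3 \<Longrightarrow> (x+y) mod 3 = (x'+y') mod 3"
  using mod_add_cong by blast
lemma ar1: "(a::nat) mod 3 = 0 \<Longrightarrow> s mod 3 = (c' + 5*y) mod 3 \<Longrightarrow> c' mod 3 = c mod 3 \<Longrightarrow> (a + (y + s)) mod 3 = c mod 3"
proof -
  assume h: "(a::nat) mod 3 = 0" "s mod 3 = (c' + 5*y) mod 3" "c' mod 3 = c mod 3"
  have "(a + (y + s)) mod 3 = (0 + (y + (c' + 5*y))) mod 3"
    by (intro modeq_add) (simp_all add: h)
  also have "0 + (y + (c' + 5*y)) = c' + (2*y)*3" by simp
  also have "(c' + (2*y)*3) mod 3 = c' mod 3" by (rule mod_mult_self1)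
  also have "\<dots> = c mod 3" by (rule h(3))
  finally show ?thesis .
qed
lemma ar2: "(a::nat) mod 3 = 0 \<Longrightarrow> s mod 3 = (c' + 5*x) mod 3 \<Longrightarrow> c' mod 3 = c mod 3 \<Longrightarrow> (s + (x + a)) mod 3 = c mod 3"
proof -
  assume h: "(a::nat) mod 3 = 0" "s mod 3 = (c' + 5*x) mod 3" "c' mod 3 = c mod 3"
  have "(s + (x + a)) mod 3 = ((c' + 5*x) + (x + 0)) mod 3"
    by (intro modeq_add) (simp_all add: h)
  also have "(c' + 5*x) + (x + 0) = c' + (2*x)*3" by simp
  also have "(c' + (2*x)*3) mod 3 = c' mod 3" by (rule mod_mult_self1)
  also have "\<dots> = c mod 3" by (rule h(3))
  finally show ?thesis .
qed
lemma ar3: "(a::nat) mod 3 = 0 \<Longrightarrow> (p + (x+y) + q) mod 3 = c' mod 3 \<Longrightarrow> c' mod 3 = c mod 3 \<Longrightarrow> (p + (x + (a + (y + q)))) mod 3 = c mod 3"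
proof -
  assume h: "(a::nat) mod 3 = 0" "(p + (x+y) + q) mod 3 = c' mod 3" "c' mod 3 = c mod 3"
  have "(p + (x + (a + (y + q)))) mod 3 = ((p + (x+y) + q) + a) mod 3" by (simp add: add_ac)
  also have "\<dots> = ((p + (x+y) + q) + 0) mod 3" by (intro modeq_add) (simp_all add: h)
  finally show ?thesis using h by simp
qed

lemma Red: "\<forall>a\<in>set as. a \<ge> 1 \<Longrightarrow> wm as = upow c \<Longrightarrow>
   odd (length as) \<and> sum_list as mod 3 = c mod 3"
proof (induction "length as" arbitrary: as c rule: less_induct)
  case less
  show ?case
  proof (cases "\<forall>a\<in>set as. a mod 3 \<noteq> 0")
    case True
    then have "\<not> inU (wm as)" by (rule not_inU_all)
    then show ?thesis using less.prems by (auto simp: inU_def)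
  next
    case False
    then obtain pre a post where as: "as = pre @ a # post" and a: "a mod 3 = 0"
      using zero_split[OF False] by (elim exE conjE) simp
    show ?thesis
    proof (cases pre)
      case Nil
      show ?thesis
      proof (cases post)
        case Nil
        have "peq (upow c) I2" using case_single[OF a] less.prems \<open>pre = []\<close> as Nil by simp
        then obtain c' where "I2 = upow c'" "c' mod 3 = c mod 3" using peq_upow_mod by blast
        then show ?thesis using as \<open>pre = []\<close> Nil a by (auto dest: I2_upow_mod)
      next
        case (Cons y post')
        have "peq (upow c) (mmul (upow y) (wm post'))"
          using case_first[OF a, of y post'] less.prems as \<open>pre = []\<close> Cons by simp
        then obtain c' where c': "mmul (upow y) (wm post') = upow c'" "c' mod 3 = c mod 3"
          using peq_upow_mod by blast
        have "wm post' = upow (c' + 5*y)" by (rule upow_cancel_left[OF c'(1)])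
        moreover have "length post' < length as" using as \<open>pre = []\<close> Cons by simp
        moreover have "\<forall>a\<in>set post'. a \<ge> 1" using less.prems as Cons by simp
        ultimately have IH: "odd (length post') \<and> sum_list post' mod 3 = (c' + 5*y) mod 3"
          using less.hyps by blast
        have "sum_list as = a + (y + sum_list post')" using as \<open>pre = []\<close> Cons by simp
        then show ?thesis using IH ar1[OF a _ c'(2)] as \<open>pre = []\<close> Cons by simp
      qed
    next
      case (Cons p pre'')
      then obtain pre' x where pre: "pre = pre' @ [x]" by (metis rev_exhaust list.distinct(1))
      show ?thesis
      proof (cases post)
        case Nil
        have "peq (upow c) (mmul (wm pre') (upow x))"
          using case_last[OF a, of pre' x] less.prems as pre Nil by simp
        then obtain c' where c': "mmul (wm pre') (upow x) = upow c'" "c' mod 3 = c mod 3"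
          using peq_upow_mod by blast
        have "wm pre' = upow (c' + 5*x)" by (rule upow_cancel_right[OF c'(1)])
        moreover have "length pre' < length as" using as pre by simp
        moreover have "\<forall>a\<in>set pre'. a \<ge> 1" using less.prems as pre by simp
        ultimately have IH: "odd (length pre') \<and> sum_list pre' mod 3 = (c' + 5*x) mod 3"
          using less.hyps by blast
        have "sum_list as = sum_list pre' + (x + a)" using as pre Nil by simp
        then show ?thesis using IH ar2[OF a _ c'(2)] as pre Nil by simp
      next
        case (Cons y post')
        have e: "as = pre' @ x # a # y # post'" using as pre Cons by simp
        have "peq (upow c) (wm (pre' @ (x+y) # post'))"
          using merge[OF a, of pre' x y post'] less.prems e by simp
        then obtain c' where c': "wm (pre' @ (x+y) # post') = upow c'" "c' mod 3 = c mod 3"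
          using peq_upow_mod by blast
        moreover have "length (pre' @ (x+y) # post') < length as" using e by simp
        moreover have "\<forall>a\<in>set (pre' @ (x+y) # post'). a \<ge> 1" using less.prems e by auto
        ultimately have IH: "odd (length (pre' @ (x+y) # post')) \<and>
             sum_list (pre' @ (x+y) # post') mod 3 = c' mod 3"
          using less.hyps by blast
        have "sum_list as = sum_list pre' + (x + (a + (y + sum_list post')))" using e by simp
        moreover have "(sum_list pre' + (x+y) + sum_list post') mod 3 = c' mod 3" using IH by (simp add: add_ac)
        ultimately show ?thesis using IH ar3[OF a _ c'(2)] e by simp
      qed
    qed
  qed
qed

lemma FR: "\<forall>a\<in>set as. a \<ge> 1 \<Longrightarrow> inU (wm as) \<Longrightarrow> (\<forall>i<length as. \<not> inU (wm (take i as))) \<Longrightarrow>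
   peq (wm as) I2"
proof (induction "length as" arbitrary: as rule: less_induct)
  case less
  show ?case
  proof (cases "\<forall>a\<in>set as. a mod 3 \<noteq> 0")
    case True
    then have "\<not> inU (wm as)" by (rule not_inU_all)
    then show ?thesis using less.prems by auto
  next
    case False
    then obtain pre a post where as: "as = pre @ a # post" and a: "a mod 3 = 0"
      using zero_split[OF False] by (elim exE conjE) simp
    show ?thesis
    proof (cases pre)
      case Nil
      show ?thesis
      proof (cases post)
        case Nil
        show ?thesis using case_single[OF a] as \<open>pre = []\<close> Nil by simp
      next
        case (Cons y post')
        have "inU (wm [a])" using case_single[OF a] inU_iff_peq peq_sym by blast
        moreover have "take 1 as = [a]" "1 < length as" using as \<open>pre = []\<close> Cons by auto
        ultimately show ?thesis using less.prems(3) by metis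
      qed
    next
      case (Cons p pre'')
      then obtain pre' x where pre: "pre = pre' @ [x]" by (metis rev_exhaust list.distinct(1))
      show ?thesis
      proof (cases post)
        case Nil
        have "inU (mmul (wm pre') (upow x))"
          using case_last[OF a, of pre' x] less.prems as pre Nil peq_inU by auto
        then obtain c where "mmul (wm pre') (upow x) = upow c" by (auto simp: inU_def)
        then have "inU (wm pre')" by (auto simp: inU_def dest: upow_cancel_right)
        moreover have "take (length pre') as = pre'" "length pre' < length as" using as pre by auto
        ultimately show ?thesis using less.prems(3) by metis
      next
        case (Cons y post')
        have e: "as = pre' @ x # a # y # post'" using as pre Cons by simp
        define as' where "as' = pre' @ (x+y) # post'"
        have pq: "peq (wm as) (wm as')" using merge[OF a, of pre' x y post'] e as'_def by simp
        have "inU (wm as')" using pq less.prems(2) peq_inU by blast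
        moreover have "length as' < length as" using e as'_def by simp
        moreover have "\<forall>a\<in>set as'. a \<ge> 1" using less.prems e as'_def by auto
        moreover have "\<forall>j<length as'. \<not> inU (wm (take j as'))"
        proof (intro allI impI)
          fix j assume j: "j < length as'"
          show "\<not> inU (wm (take j as'))"
          proof (cases "j \<le> length pre'")
            case True
            then have "take j as' = take j as" using e as'_def by simp
            moreover have "j < length as" using j e as'_def by simp
            ultimately show ?thesis using less.prems(3) by metis
          next
            case False
            define t where "t = j - length pre' - 1"
            have t1: "take j as' = pre' @ (x+y) # take t post'"
              using False unfolding as'_def t_def by (simp add: take_Cons')
            have t2: "take (j+2) as = pre' @ x # a # y # take t post'"
              using False unfolding e t_def by (simp add: take_Cons' numeral_eq_Suc)
            have "peq (wm (take (j+2) as)) (wm (take j as'))"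
              unfolding t1 t2 by (rule merge[OF a])
            moreover have "j + 2 < length as" using j e as'_def by simp
            ultimately show ?thesis using less.prems(3) peq_inU by metis
          qed
        qed
        ultimately have "peq (wm as') I2" using less.hyps by blast
        then show ?thesis using pq peq_trans by blast
      qed
    qed
  qed
qed


lemma no_SS_Cons: "no_SS (x # xs) \<longleftrightarrow> (xs \<noteq> [] \<longrightarrow> \<not> (x = S \<and> hd xs = S)) \<and> no_SS xs"
proof
  assume h: "no_SS (x # xs)"
  have "no_SS xs" unfolding no_SS_def
  proof (intro allI impI)
    fix i assume "Suc i < length xs"
    then show "\<not> (xs ! i = S \<and> xs ! Suc i = S)" using h[unfolded no_SS_def, rule_format, of "Suc i"] by simp
  qed
  moreover have "xs \<noteq> [] \<longrightarrow> \<not> (x = S \<and> hd xs = S)"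
    using h[unfolded no_SS_def, rule_format, of 0] by (cases xs) auto
  ultimately show "(xs \<noteq> [] \<longrightarrow> \<not> (x = S \<and> hd xs = S)) \<and> no_SS xs" by blast
next
  assume h: "(xs \<noteq> [] \<longrightarrow> \<not> (x = S \<and> hd xs = S)) \<and> no_SS xs"
  show "no_SS (x # xs)" unfolding no_SS_def
  proof (intro allI impI)
    fix i assume i: "Suc i < length (x # xs)"
    show "\<not> ((x # xs) ! i = S \<and> (x # xs) ! Suc i = S)"
    proof (cases i)
      case 0
      then show ?thesis using h i by (cases xs) auto
    next
      case (Suc j)
      then show ?thesis using h i unfolding no_SS_def by auto
    qed
  qed
qed

lemma no_SS_Nil[simp]: "no_SS []" by (simp add: no_SS_def)

lemma no_SS_append: "no_SS (xs @ ys) \<longleftrightarrow> no_SS xs \<and> no_SS ys \<and> \<not> (xs \<noteq> [] \<and> ys \<noteq> [] \<and> last xs = S \<and> hd ys = S)"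
  by (induction xs) (auto simp: no_SS_Cons)

definition sw :: "letter list \<Rightarrow> bool" where
  "sw w \<longleftrightarrow> w \<noteq> [] \<and> hd w = S \<and> last w = S \<and> no_SS w"

lemma no_SS_replicate_U: "no_SS (replicate a U)"
  by (induction a) (auto simp: no_SS_Cons)

lemma wtail_props: "\<forall>a\<in>set as. a \<ge> 1 \<Longrightarrow> no_SS (wtail as) \<and> (as \<noteq> [] \<longrightarrow> last (wtail as) = S \<and> hd (wtail as) = U)"
proof (induction as)
  case Nil then show ?case by simp
next
  case (Cons a as)
  then obtain a' where a: "a = Suc a'" by (metis Suc_le_D list.set_intros(1) One_nat_def)
  show ?case using Cons a
    by (auto simp: wtail_Cons no_SS_append no_SS_Cons no_SS_replicate_U)
qed

lemma sw_wexp_iff: "\<forall>a\<in>set as. a \<ge> 1 \<Longrightarrow> sw (wexp as)"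
  using wtail_props[of as] unfolding sw_def wexp_def
  by (cases "as = []") (auto simp: no_SS_Cons)

lemma sw_wexp: "sw w \<Longrightarrow> \<exists>as. (\<forall>a\<in>set as. a \<ge> 1) \<and> w = wexp as"
proof (induction "length w" arbitrary: w rule: less_induct)
  case less
  then obtain r where w: "w = S # r" unfolding sw_def by (cases w) auto
  show ?case
  proof (cases "r = []")
    case True
    then show ?thesis using w by (intro exI[of _ "[]"]) (simp add: wexp_def)
  next
    case False
    define t where "t = takeWhile (\<lambda>x. x = U) r"
    define d where "d = dropWhile (\<lambda>x. x = U) r"
    have rtd: "r = t @ d" unfolding t_def d_def by simp
    define n where "n = length t"
    have t: "t = replicate n U" unfolding t_def n_def
      by (metis (mono_tags) replicate_length_same set_takeWhileD)
    have hdr: "hd r = U" using less.prems False w unfolding sw_def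
      by (cases "hd r") (auto simp: no_SS_Cons)
    have tpos: "n \<ge> 1" using hdr False unfolding t_def n_def by (cases r) auto
    have dne: "d \<noteq> []"
    proof
      assume "d = []"
      then have "w = S # replicate n U" using w rtd t by simp
      then have "last w = U" using tpos by (cases n) auto
      then show False using less.prems unfolding sw_def by simp
    qed
    have hdd: "hd d = S" using dne unfolding d_def
      by (metis (full_types) hd_dropWhile letter.exhaust)
    have lastd: "last d = S" using less.prems w rtd dne unfolding sw_def by simp
    have nod: "no_SS d" using less.prems w rtd unfolding sw_def by (simp add: no_SS_Cons no_SS_append)
    have "sw d" using dne hdd lastd nod unfolding sw_def by simp
    moreover have "length d < length w" using w rtd by simp
    ultimately obtain as where as: "\<forall>a\<in>set as. a \<ge> 1" "d = wexp as" using less.hyps by blast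
    have "w = wexp (n # as)" using w rtd t as(2) by (simp add: wexp_Cons)
    then show ?thesis using as(1) tpos by (intro exI[of _ "n # as"]) simp
  qed
qed

lemma count_rep: "count_list (replicate a x) y = (if x = y then a else 0)"
  by (induction a) auto

lemma count_wtail: "count_list (wtail as) U = sum_list as" "count_list (wtail as) S = length as"
  by (induction as) (simp_all add: wtail_Cons count_rep)

lemma count_wexp: "count_list (wexp as) U = sum_list as" "count_list (wexp as) S = Suc (length as)"
  by (simp_all add: wexp_def count_wtail)

lemma last_wtail: "wtail as \<noteq> [] \<Longrightarrow> last (wtail as) = S"
  by (induction as) (auto simp: wtail_Cons last_append)

lemma last_wexp[simp]: "last (wexp as) = S"
  using last_wtail[of as] by (simp add: wexp_def)

lemma wexp_ne[simp]: "wexp as \<noteq> []" by (simp add: wexp_def)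

lemma wexp_prefix: "\<forall>a\<in>set as. a \<ge> 1 \<Longrightarrow> i < length as \<Longrightarrow> \<exists>q. wexp as = wexp (take i as) @ U # q"
proof -
  assume h: "\<forall>a\<in>set as. a \<ge> 1" "i < length as"
  have "as = take i as @ drop i as" by simp
  then have e: "wexp as = wexp (take i as) @ wtail (drop i as)" by (metis wexp_append)
  obtain b rest where "drop i as = b # rest" using h(2) by (metis Cons_nth_drop_Suc)
  moreover have "b \<ge> 1" using h calculation by (metis in_set_dropD list.set_intros(1))
  ultimately show ?thesis using e by (cases b) (auto simp: wtail_Cons)
qed

definition NP :: "letter list \<Rightarrow> bool" where
  "NP w \<longleftrightarrow> (\<forall>p q. w = p @ U # q \<longrightarrow> p \<noteq> [] \<longrightarrow> last p = S \<longrightarrow> \<not> inU (word_mat p))"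

lemma FR_word: "sw x \<Longrightarrow> inU (word_mat x) \<Longrightarrow> NP x \<Longrightarrow> peq (word_mat x) I2"
proof -
  assume h: "sw x" "inU (word_mat x)" "NP x"
  obtain as where as: "\<forall>a\<in>set as. a \<ge> 1" "x = wexp as" using sw_wexp[OF h(1)] by blast
  have "\<forall>i<length as. \<not> inU (wm (take i as))"
  proof (intro allI impI)
    fix i assume "i < length as"
    then obtain q where "wexp as = wexp (take i as) @ U # q" using wexp_prefix as(1) by blast
    then show "\<not> inU (wm (take i as))" using h(3) as(2) unfolding NP_def wm_def by simp
  qed
  then show ?thesis using FR[OF as(1)] h(2) as(2) unfolding wm_def by simp
qed

lemma Red_word: "sw x \<Longrightarrow> word_mat x = upow c \<Longrightarrow>
   count_list x U mod 3 = c mod 3 \<and> even (count_list x S)"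
proof -
  assume h: "sw x" "word_mat x = upow c"
  obtain as where as: "\<forall>a\<in>set as. a \<ge> 1" "x = wexp as" using sw_wexp[OF h(1)] by blast
  show ?thesis using Red[OF as(1), of c] h(2) as(2) by (simp add: wm_def count_wexp)
qed


lemma is_identity_peq: "is_identity w \<longleftrightarrow> peq (word_mat w) I2"
  by (simp add: is_identity_def peq_def I2_def)

lemma length_counts: "length (w::letter list) = count_list w U + count_list w S"
proof (induction w)
  case Nil then show ?case by simp
next
  case (Cons x w) then show ?case by (cases x) auto
qed

lemma frame: "w = x1 # x2 # r1 \<Longrightarrow> w = w1 @ [y1,y2] \<Longrightarrow> length w \<ge> 5 \<Longrightarrow>
   \<exists>B. B \<noteq> [] \<and> w = [x1,x2] @ B @ [y1,y2]"
proof -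
  assume h: "w = x1 # x2 # r1" "w = w1 @ [y1,y2]" "length w \<ge> 5"
  have "length w = length w1 + 2" using h(2) by simp
  then have "length w1 \<ge> 3" using h(3) by simp
  then obtain a b B where w1: "w1 = a # b # B" and "B \<noteq> []"
    by (metis Suc_le_length_iff length_0_conv numeral_3_eq_3 not_less_eq_eq list.size(3) le_zero_eq Suc_n_not_le_n)
  then show ?thesis using h by auto
qed

lemma a_word_iff: "a_word w \<longleftrightarrow> sw w \<and> peq (word_mat w) I2"
proof
  assume "a_word w"
  then show "sw w \<and> peq (word_mat w) I2"
    unfolding a_word_def sw_def is_identity_peq by auto
next
  assume h: "sw w \<and> peq (word_mat w) I2"
  obtain as where as: "\<forall>a\<in>set as. a \<ge> 1" "w = wexp as" using sw_wexp h by blast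
  have "peq (upow 0) (wm as)" using h as(2) by (simp add: wm_def peq_sym)
  then obtain c where c: "wm as = upow c" "c mod 3 = 0" using peq_upow_mod by fastforce
  have R: "odd (length as)" "sum_list as mod 3 = 0" using Red[OF as(1) c(1)] c(2) by auto
  then obtain a rest where ar: "as = a # rest" by (cases as) auto
  obtain as' z where az: "as = as' @ [z]" using ar by (metis rev_exhaust list.distinct(1))
  have "a \<in> set as" using ar by simp
  moreover have "z \<in> set as" unfolding az by simp
  ultimately
  have a1: "a \<ge> 1" "z \<ge> 1" using as(1) by auto
  have "sum_list as \<ge> 1" using ar a1 by simp
  then have "sum_list as \<ge> 3" using R(2) by (metis le_less_linear mod_less not_less_eq_eq numeral_3_eq_3
        One_nat_def Suc_1 less_Suc_eq le_SucE not_one_le_zero zero_neq_numeral)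
  then have len: "length w \<ge> 5" using as(2) ar by (simp add: length_counts count_wexp)
  obtain a' where a': "a = Suc a'" using a1 by (cases a) auto
  obtain z' where z': "z = Suc z'" using a1 by (cases z) auto
  have w1: "w = S # U # (replicate a' U @ wexp rest)" using as(2) ar a' by (simp add: wexp_Cons)
  have w2: "w = (wexp as' @ replicate z' U) @ [U, S]" using as(2) az z'
    by (simp add: wexp_append wtail_Cons replicate_append_same[symmetric])
  obtain B where "B \<noteq> []" "w = [S,U] @ B @ [U,S]" using frame[OF w1 w2 len] by blast
  then show "a_word w" using h unfolding a_word_def sw_def is_identity_peq by auto
qed

lemma join_single[simp]: "join [A] as = A" by (cases as) auto
lemma join_cons: "As \<noteq> [] \<Longrightarrow> join (A # As) (a # as) = A @ replicate a U @ join As as"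
  by (cases As) auto

lemma join_app: "Rs \<noteq> [] \<Longrightarrow> Rs' \<noteq> [] \<Longrightarrow> length gs = length Rs - 1 \<Longrightarrow>
  join (Rs @ Rs') (gs @ a # gs') = join Rs gs @ replicate a U @ join Rs' gs'"
proof (induction Rs arbitrary: gs)
  case Nil then show ?case by simp
next
  case (Cons R Rs)
  show ?case
  proof (cases "Rs = []")
    case True
    then show ?thesis using Cons by (simp add: join_cons)
  next
    case False
    then obtain g gs1 where "gs = g # gs1" using Cons.prems by (cases gs) auto
    then show ?thesis using Cons False by (simp add: join_cons)
  qed
qed

lemma join_mat: "\<forall>A\<in>set As. peq (word_mat A) I2 \<Longrightarrow> length gs = length As - 1 \<Longrightarrow> As \<noteq> [] \<Longrightarrow>
  peq (word_mat (join As gs)) (upow (sum_list gs))"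
proof (induction As arbitrary: gs)
  case Nil then show ?case by simp
next
  case (Cons A As)
  show ?case
  proof (cases "As = []")
    case True
    then show ?thesis using Cons by simp
  next
    case False
    then obtain g gs1 where gs: "gs = g # gs1" using Cons.prems by (cases gs) auto
    have IH: "peq (word_mat (join As gs1)) (upow (sum_list gs1))" using Cons False gs by simp
    have "peq (word_mat (join (A # As) gs)) (mmul I2 (mmul (upow g) (upow (sum_list gs1))))"
      unfolding gs join_cons[OF False] word_mat_append upow_def[symmetric]
      using Cons.prems(1) IH by (intro peq_mmul) auto
    then show ?thesis using gs by (simp add: upow_add)
  qed
qed

lemma join_count: "length gs = length As - 1 \<Longrightarrow>
  count_list (join As gs) x = sum_list (map (\<lambda>A. count_list A x) As) + (if x = U then sum_list gs else 0)"
proof (induction As arbitrary: gs)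
  case Nil then show ?case by simp
next
  case (Cons A As)
  show ?case
  proof (cases "As = []")
    case True
    then show ?thesis using Cons by simp
  next
    case False
    then obtain g gs1 where gs: "gs = g # gs1" using Cons.prems by (cases gs) auto
    then show ?thesis using Cons False by (simp add: join_cons count_rep)
  qed
qed

lemma no_SS_rep_app: "no_SS J \<Longrightarrow> no_SS (replicate g U @ J)"
  by (induction g) (auto simp: no_SS_Cons)

lemma join_sw: "\<forall>A\<in>set As. sw A \<Longrightarrow> \<forall>g\<in>set gs. g \<ge> 1 \<Longrightarrow> length gs = length As - 1 \<Longrightarrow> As \<noteq> [] \<Longrightarrow>
  sw (join As gs)"
proof (induction As arbitrary: gs)
  case Nil then show ?case by simp
next
  case (Cons A As)
  show ?case
  proof (cases "As = []")
    case True
    then show ?thesis using Cons by simp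
  next
    case False
    then obtain g gs1 where gs: "gs = g # gs1" using Cons.prems by (cases gs) auto
    have IH: "sw (join As gs1)" using Cons False gs by simp
    have A: "sw A" using Cons by simp
    obtain g' where g': "g = Suc g'" using Cons.prems gs by (cases g) auto
    show ?thesis unfolding gs join_cons[OF False] using IH A g'
      by (auto simp: sw_def no_SS_append no_SS_Cons no_SS_rep_app no_SS_replicate_U)
  qed
qed


lemma split_at: "sw x \<Longrightarrow> x = p @ U # q \<Longrightarrow> p \<noteq> [] \<Longrightarrow> last p = S \<Longrightarrow>
   \<exists>n d. n \<ge> 1 \<and> x = p @ replicate n U @ d \<and> sw p \<and> sw d"
proof -
  assume h: "sw x" "x = p @ U # q" "p \<noteq> []" "last p = S"
  define t where "t = takeWhile (\<lambda>y. y = U) (U # q)"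
  define d where "d = dropWhile (\<lambda>y. y = U) (U # q)"
  define n where "n = length t"
  have rtd: "U # q = t @ d" unfolding t_def d_def by simp
  have t: "t = replicate n U" unfolding t_def n_def
    by (metis (mono_tags) replicate_length_same set_takeWhileD)
  have n1: "n \<ge> 1" unfolding n_def t_def by simp
  have x: "x = p @ replicate n U @ d" using h(2) rtd t by simp
  have dne: "d \<noteq> []"
  proof
    assume "d = []"
    then have "last x = U" using x n1 by (cases n) auto
    then show False using h(1) unfolding sw_def by simp
  qed
  have hdd: "hd d = S" using dne unfolding d_def
    by (metis (full_types) hd_dropWhile letter.exhaust)
  have "sw d" using h(1) x dne hdd unfolding sw_def by (auto simp: no_SS_append)
  moreover have "sw p" using h x unfolding sw_def by (auto simp: no_SS_append)
  ultimately show ?thesis using x n1 by blast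
qed

lemma inU_rest: "inU (word_mat (p @ replicate n U @ d)) \<Longrightarrow> inU (word_mat p) \<Longrightarrow> inU (word_mat d)"
proof -
  assume "inU (word_mat (p @ replicate n U @ d))" "inU (word_mat p)"
  then obtain c c1 where "mmul (upow c1) (mmul (upow n) (word_mat d)) = upow c"
    unfolding inU_def by (auto simp: upow_def)
  then show ?thesis unfolding inU_def by (blast dest: upow_cancel_left)
qed

lemma aw_props: "a_word A \<Longrightarrow> A \<noteq> [] \<and> last A = S \<and> inU (word_mat A) \<and> sw A"
  using a_word_iff[of A] inU_iff_peq peq_sym unfolding sw_def by blast

lemma NP_prim: "a_word w \<Longrightarrow> NP w \<Longrightarrow> primitive_a_word w"
proof -
  assume aw: "a_word w" and np: "NP w"
  show ?thesis unfolding primitive_a_word_def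
  proof (intro conjI aw notI)
    assume "\<exists>As \<alpha>s. length As \<ge> 2 \<and> length \<alpha>s = length As - 1 \<and>
              (\<forall>\<alpha>\<in>set \<alpha>s. \<alpha> \<ge> 1) \<and> (\<forall>A\<in>set As. a_word A) \<and> w = join As \<alpha>s"
    then obtain As gs where h: "length As \<ge> 2" "length gs = length As - 1"
      "\<forall>g\<in>set gs. g \<ge> 1" "\<forall>A\<in>set As. a_word A" "w = join As gs" by blast
    then obtain A1 As' where As0: "As = A1 # As'" by (cases As) auto
    then have As: "As = A1 # As'" "As' \<noteq> []" using h(1) by auto
    then obtain g gs' where gs: "gs = g # gs'" using h(2) by (cases gs) auto
    have "g \<ge> 1" using h(3) gs by simp
    then obtain g' where g': "g = Suc g'" by (cases g) auto
    have w: "w = A1 @ U # (replicate g' U @ join As' gs')"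
      using h(5) As gs g' by (simp add: join_cons)
    have "a_word A1" using h(4) As by simp
    then show False using np w aw_props unfolding NP_def by blast
  qed
qed

definition dec :: "letter list list \<Rightarrow> nat list \<Rightarrow> bool" where
  "dec As gs \<longleftrightarrow> As \<noteq> [] \<and> length gs = length As - 1 \<and> (\<forall>g\<in>set gs. g \<ge> 1) \<and>
      (\<forall>A\<in>set As. primitive_a_word A)"

lemma dec_app: "dec Rs gs \<Longrightarrow> dec Rs' gs' \<Longrightarrow> n \<ge> 1 \<Longrightarrow> dec (Rs @ Rs') (gs @ n # gs')"
  unfolding dec_def by (cases Rs) auto

lemma E: "sw x \<Longrightarrow> inU (word_mat x) \<Longrightarrow> \<exists>Rs gs. dec Rs gs \<and> x = join Rs gs"
proof (induction "length x" arbitrary: x rule: less_induct)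
  case less
  show ?case
  proof (cases "NP x")
    case True
    have "peq (word_mat x) I2" by (rule FR_word[OF less.prems True])
    then have "a_word x" using less.prems a_word_iff by blast
    then have "primitive_a_word x" using NP_prim True by blast
    then have "dec [x] [] \<and> x = join [x] []" by (simp add: dec_def)
    then show ?thesis by blast
  next
    case False
    then obtain p q where pq: "x = p @ U # q" "p \<noteq> []" "last p = S" "inU (word_mat p)"
      unfolding NP_def by blast
    obtain n d where nd: "n \<ge> 1" "x = p @ replicate n U @ d" "sw p" "sw d"
      using split_at[OF less.prems(1) pq(1-3)] by blast
    have "inU (word_mat d)" using inU_rest less.prems(2) nd(2) pq(4) by metis
    moreover have "length d < length x" using nd(2) pq(2) by simp
    ultimately obtain Rs' gs' where R': "dec Rs' gs'" "d = join Rs' gs'" using less.hyps nd(4) by blast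
    have "length p < length x" using nd(2) nd(1) by simp
    then obtain Rs gs where R: "dec Rs gs" "p = join Rs gs" using less.hyps nd(3) pq(4) by blast
    have "x = join (Rs @ Rs') (gs @ n # gs')"
      using R R' nd(2) by (simp add: join_app dec_def)
    then show ?thesis using dec_app[OF R(1) R'(1) nd(1)] by blast
  qed
qed

lemma prim_aw: "primitive_a_word w \<Longrightarrow> a_word w" by (simp add: primitive_a_word_def)

lemma Prim_NP: "primitive_a_word w \<Longrightarrow> NP w"
proof (rule ccontr)
  assume pw: "primitive_a_word w" and "\<not> NP w"
  then obtain p q where pq: "w = p @ U # q" "p \<noteq> []" "last p = S" "inU (word_mat p)"
    unfolding NP_def by blast
  have aw: "a_word w" using pw prim_aw by blast
  then have sw: "sw w" "inU (word_mat w)" using aw_props by auto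
  obtain n d where nd: "n \<ge> 1" "w = p @ replicate n U @ d" "sw p" "sw d"
    using split_at[OF sw(1) pq(1-3)] by blast
  have "inU (word_mat d)" using inU_rest sw(2) nd(2) pq(4) by metis
  then obtain Rs' gs' where R': "dec Rs' gs'" "d = join Rs' gs'" using E nd(4) by blast
  obtain Rs gs where R: "dec Rs gs" "p = join Rs gs" using E nd(3) pq(4) by blast
  have w: "w = join (Rs @ Rs') (gs @ n # gs')"
    using R R' nd(2) by (simp add: join_app dec_def)
  have D: "dec (Rs @ Rs') (gs @ n # gs')" using dec_app[OF R(1) R'(1) nd(1)] .
  have "length (Rs @ Rs') \<ge> 2" using R(1) R'(1) unfolding dec_def by (cases Rs; cases Rs') auto
  moreover have "\<forall>A\<in>set (Rs @ Rs'). a_word A" using D unfolding dec_def by (auto intro: prim_aw)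
  ultimately show False using pw w D unfolding primitive_a_word_def dec_def by blast
qed


lemma exists_dec: "a_word w \<Longrightarrow> \<exists>As gs. dec As gs \<and> w = join As gs"
  using E aw_props by blast

lemma dec_sw: "dec As gs \<Longrightarrow> sw (join As gs)"
  unfolding dec_def by (intro join_sw) (auto dest: prim_aw aw_props)

lemma dec_mat: "dec As gs \<Longrightarrow> peq (word_mat (join As gs)) (upow (sum_list gs))"
  unfolding dec_def by (intro join_mat) (auto dest!: prim_aw simp: a_word_iff)

lemma dec_aw: "dec As gs \<Longrightarrow> 3 dvd sum_list gs \<Longrightarrow> a_word (join As gs)"
proof -
  assume d: "dec As gs" "3 dvd sum_list gs"
  have "peq (upow (sum_list gs)) I2" using d(2) peq_upow3 by auto
  then have "peq (word_mat (join As gs)) I2" using dec_mat[OF d(1)] peq_trans by blast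
  then show ?thesis using dec_sw[OF d(1)] a_word_iff by blast
qed

lemma dec_sum3: "dec As gs \<Longrightarrow> a_word (join As gs) \<Longrightarrow> 3 dvd sum_list gs"
proof -
  assume d: "dec As gs" "a_word (join As gs)"
  have "peq (word_mat (join As gs)) I2" using d(2) a_word_iff by blast
  then have "peq (upow (sum_list gs)) I2" using dec_mat[OF d(1)] peq_trans peq_sym by blast
  then obtain c' where "I2 = upow c'" "c' mod 3 = sum_list gs mod 3" using peq_upow_mod by blast
  then show ?thesis using I2_upow_mod by fastforce
qed

lemma hdpref: "A @ RA = B @ RB \<Longrightarrow> (RA \<noteq> [] \<longrightarrow> hd RA = U) \<Longrightarrow> (RB \<noteq> [] \<longrightarrow> hd RB = U) \<Longrightarrow>
   primitive_a_word A \<Longrightarrow> primitive_a_word B \<Longrightarrow> A = B"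
proof -
  assume h: "A @ RA = B @ RB" "RA \<noteq> [] \<longrightarrow> hd RA = U" "RB \<noteq> [] \<longrightarrow> hd RB = U"
    "primitive_a_word A" "primitive_a_word B"
  have pA: "B \<noteq> [] \<and> last B = S \<and> inU (word_mat B)" "A \<noteq> [] \<and> last A = S \<and> inU (word_mat A)"
    using h(4,5) prim_aw aw_props by blast+
  have npA: "NP A" "NP B" using h(4,5) Prim_NP by blast+
  obtain us where "(A = B @ us \<and> us @ RA = RB) \<or> (A @ us = B \<and> RA = us @ RB)"
    using h(1) append_eq_append_conv2 by blast
  then show "A = B"
  proof
    assume c: "A = B @ us \<and> us @ RA = RB"
    show "A = B"
    proof (cases us)
      case Nil then show ?thesis using c by simp
    next
      case (Cons u us')
      then have "u = U" using c h(3) by auto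
      then have "A = B @ U # us'" using c Cons by simp
      then show ?thesis using npA(1) pA(1) unfolding NP_def by blast
    qed
  next
    assume c: "A @ us = B \<and> RA = us @ RB"
    show "A = B"
    proof (cases us)
      case Nil then show ?thesis using c by simp
    next
      case (Cons u us')
      then have "u = U" using c h(2) by auto
      then have "B = A @ U # us'" using c Cons by simp
      then show ?thesis using npA(2) pA(2) unfolding NP_def by blast
    qed
  qed
qed

lemma rep_eq: "replicate g U @ J = replicate h U @ J' \<Longrightarrow> J \<noteq> [] \<Longrightarrow> hd J = S \<Longrightarrow>
   J' \<noteq> [] \<Longrightarrow> hd J' = S \<Longrightarrow> g = h \<and> J = J'"
proof (induction g arbitrary: h)
  case 0 then show ?case by (cases h) auto
next
  case (Suc g) then show ?case by (cases h) auto
qed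

lemma join_decomp: "dec (A # As') gs \<Longrightarrow>
  (As' = [] \<and> join (A # As') gs = A \<and> gs = []) \<or>
  (\<exists>g gs'. As' \<noteq> [] \<and> gs = g # gs' \<and> join (A # As') gs = A @ replicate g U @ join As' gs' \<and>
     g \<ge> 1 \<and> dec As' gs' \<and> sw (join As' gs'))"
proof (cases "As' = []")
  case True
  assume "dec (A # As') gs"
  then show ?thesis using True by (simp add: dec_def)
next
  case False
  assume d: "dec (A # As') gs"
  then obtain g gs' where gs: "gs = g # gs'" using False unfolding dec_def by (cases gs) auto
  have d': "dec As' gs'" using d gs False unfolding dec_def by auto
  show ?thesis using False gs d d' dec_sw[OF d'] by (auto simp: join_cons dec_def)
qed

lemma uniq: "dec As gs \<Longrightarrow> dec Bs hs \<Longrightarrow> join As gs = join Bs hs \<Longrightarrow> As = Bs \<and> gs = hs"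
proof (induction As arbitrary: gs Bs hs)
  case Nil then show ?case by (simp add: dec_def)
next
  case (Cons A As')
  obtain B Bs' where Bs: "Bs = B # Bs'" using Cons.prems(2) unfolding dec_def by (cases Bs) auto
  have pA: "primitive_a_word A" "primitive_a_word B" using Cons.prems(1,2) Bs unfolding dec_def by auto
  have JA: "(As' = [] \<and> join (A # As') gs = A \<and> gs = []) \<or>
    (\<exists>g gs'. As' \<noteq> [] \<and> gs = g # gs' \<and> join (A # As') gs = A @ replicate g U @ join As' gs' \<and>
     g \<ge> 1 \<and> dec As' gs' \<and> sw (join As' gs'))" using join_decomp Cons.prems(1) by blast
  have JB: "(Bs' = [] \<and> join (B # Bs') hs = B \<and> hs = []) \<or>
    (\<exists>h hs'. Bs' \<noteq> [] \<and> hs = h # hs' \<and> join (B # Bs') hs = B @ replicate h U @ join Bs' hs' \<and>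
     h \<ge> 1 \<and> dec Bs' hs' \<and> sw (join Bs' hs'))" using join_decomp Cons.prems(2) Bs by blast
  have eq: "join (A # As') gs = join (B # Bs') hs" using Cons.prems(3) Bs by simp
  from JA show ?case
  proof
    assume a: "As' = [] \<and> join (A # As') gs = A \<and> gs = []"
    from JB show ?thesis
    proof
      assume b: "Bs' = [] \<and> join (B # Bs') hs = B \<and> hs = []"
      then show ?thesis using a eq Bs by simp
    next
      assume "\<exists>h hs'. Bs' \<noteq> [] \<and> hs = h # hs' \<and> join (B # Bs') hs = B @ replicate h U @ join Bs' hs' \<and>
        h \<ge> 1 \<and> dec Bs' hs' \<and> sw (join Bs' hs')"
      then obtain h hs' where b: "join (B # Bs') hs = B @ replicate h U @ join Bs' hs'" "h \<ge> 1" by blast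
      have "A @ [] = B @ (replicate h U @ join Bs' hs')" using a b eq by simp
      then have "A = B" using hdpref pA b(2) by (metis hd_append hd_replicate replicate_empty not_one_le_zero)
      then have "replicate h U @ join Bs' hs' = []" using a b eq by simp
      then show ?thesis using b(2) by simp
    qed
  next
    assume "\<exists>g gs'. As' \<noteq> [] \<and> gs = g # gs' \<and> join (A # As') gs = A @ replicate g U @ join As' gs' \<and>
     g \<ge> 1 \<and> dec As' gs' \<and> sw (join As' gs')"
    then obtain g gs' where a: "As' \<noteq> []" "gs = g # gs'" "join (A # As') gs = A @ replicate g U @ join As' gs'"
      "g \<ge> 1" "dec As' gs'" "sw (join As' gs')" by blast
    from JB show ?thesis
    proof
      assume b: "Bs' = [] \<and> join (B # Bs') hs = B \<and> hs = []"
      have "A @ (replicate g U @ join As' gs') = B @ []" using a b eq by simp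
      then have "A = B" using hdpref pA a(4) by (metis hd_append hd_replicate replicate_empty not_one_le_zero)
      then have "replicate g U @ join As' gs' = []" using a b eq by simp
      then show ?thesis using a(4) by simp
    next
      assume "\<exists>h hs'. Bs' \<noteq> [] \<and> hs = h # hs' \<and> join (B # Bs') hs = B @ replicate h U @ join Bs' hs' \<and>
        h \<ge> 1 \<and> dec Bs' hs' \<and> sw (join Bs' hs')"
      then obtain h hs' where b: "Bs' \<noteq> []" "hs = h # hs'" "join (B # Bs') hs = B @ replicate h U @ join Bs' hs'"
        "h \<ge> 1" "dec Bs' hs'" "sw (join Bs' hs')" by blast
      have e2: "A @ (replicate g U @ join As' gs') = B @ (replicate h U @ join Bs' hs')" using a b eq by simp
      have "A = B" using hdpref[OF e2 _ _ pA] a(4) b(4)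
        by (metis hd_append hd_replicate replicate_empty not_one_le_zero)
      then have "replicate g U @ join As' gs' = replicate h U @ join Bs' hs'" using e2 by simp
      then have "g = h \<and> join As' gs' = join Bs' hs'" using rep_eq a(6) b(6) unfolding sw_def by blast
      moreover have "As' = Bs' \<and> gs' = hs'" using Cons.IH[OF a(5) b(5)] calculation by blast
      ultimately show ?thesis using \<open>A = B\<close> a(2) b(2) Bs by simp
    qed
  qed
qed

lemma prim_counts: "primitive_a_word A \<Longrightarrow> count_list A U mod 3 = 0 \<and> even (count_list A S)"
proof -
  assume "primitive_a_word A"
  then have aw: "a_word A" by (rule prim_aw)
  then have "sw A" "peq (word_mat A) I2" using a_word_iff by blast+
  then obtain c where "word_mat A = upow c" "c mod 3 = 0"
    using peq_upow_mod[of 0] peq_sym by (metis upow_0 mod_0)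
  then show ?thesis using Red_word \<open>sw A\<close> by metis
qed


lemma card_lists_nth: "card {xs. length xs = s \<and> (\<forall>i<s. xs ! i \<in> F i)} = (\<Prod>i<s. card (F i))"
proof (induction s arbitrary: F)
  case 0
  have "{xs. length xs = 0 \<and> (\<forall>i<0. xs ! i \<in> F i)} = {[]}" by auto
  then show ?case by simp
next
  case (Suc s)
  have e: "{xs. length xs = Suc s \<and> (\<forall>i<Suc s. xs ! i \<in> F i)} =
    (\<lambda>(x, xs). x # xs) ` (F 0 \<times> {xs. length xs = s \<and> (\<forall>i<s. xs ! i \<in> F (Suc i))})"
  proof (intro set_eqI iffI)
    fix ys assume "ys \<in> {xs. length xs = Suc s \<and> (\<forall>i<Suc s. xs ! i \<in> F i)}"
    then obtain y ys' where "ys = y # ys'" "length ys' = s" "\<forall>i<Suc s. ys ! i \<in> F i"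
      by (cases ys) auto
    then show "ys \<in> (\<lambda>(x, xs). x # xs) ` (F 0 \<times> {xs. length xs = s \<and> (\<forall>i<s. xs ! i \<in> F (Suc i))})"
      by (auto intro!: image_eqI[of _ _ "(y, ys')"])
  next
    fix ys assume "ys \<in> (\<lambda>(x, xs). x # xs) ` (F 0 \<times> {xs. length xs = s \<and> (\<forall>i<s. xs ! i \<in> F (Suc i))})"
    then show "ys \<in> {xs. length xs = Suc s \<and> (\<forall>i<Suc s. xs ! i \<in> F i)}"
      by (auto simp: less_Suc_eq_0_disj)
  qed
  have "inj_on (\<lambda>(x, xs). x # xs) (F 0 \<times> {xs. length xs = s \<and> (\<forall>i<s. xs ! i \<in> F (Suc i))})"
    by (auto simp: inj_on_def)
  then have "card {xs. length xs = Suc s \<and> (\<forall>i<Suc s. xs ! i \<in> F i)} =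
      card (F 0) * card {xs. length xs = s \<and> (\<forall>i<s. xs ! i \<in> F (Suc i))}"
    unfolding e by (simp add: card_image card_cartesian_product)
  also have "\<dots> = card (F 0) * (\<Prod>i<s. card (F (Suc i)))" using Suc.IH by simp
  also have "\<dots> = (\<Prod>i<Suc s. card (F i))" by (rule prod.lessThan_Suc_shift[symmetric])
  finally show ?case .
qed

definition Comp :: "nat \<Rightarrow> nat \<Rightarrow> nat list set" where
  "Comp N j = {xs. length xs = j \<and> (\<forall>x\<in>set xs. x \<ge> 1) \<and> sum_list xs = N}"

lemma sum_list_Suc: "sum_list (map Suc l) = sum_list l + length l"
  by (induction l) auto

lemma length_le_sum: "\<forall>x\<in>set xs. (x::nat) \<ge> 1 \<Longrightarrow> length xs \<le> sum_list xs"
  by (induction xs) auto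

lemma card_Comp: "1 \<le> j \<Longrightarrow> j \<le> N \<Longrightarrow> card (Comp N j) = (N - 1) choose (j - 1)"
proof -
  assume j: "1 \<le> j" "j \<le> N"
  have e: "Comp N j = map Suc ` {l. length l = j \<and> sum_list l = N - j}"
  proof (intro set_eqI iffI)
    fix xs assume "xs \<in> Comp N j"
    then have h: "length xs = j" "\<forall>x\<in>set xs. x \<ge> 1" "sum_list xs = N" unfolding Comp_def by auto
    have "xs = map Suc (map (\<lambda>x. x - 1) xs)" using h(2) by (induction xs) auto
    moreover have "sum_list (map (\<lambda>x. x - 1) xs) = N - j"
      using sum_list_Suc[of "map (\<lambda>x. x - 1) xs"] calculation h by simp
    ultimately show "xs \<in> map Suc ` {l. length l = j \<and> sum_list l = N - j}" using h(1)
      by (intro image_eqI[of _ _ "map (\<lambda>x. x - 1) xs"]) auto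
  next
    fix xs assume "xs \<in> map Suc ` {l. length l = j \<and> sum_list l = N - j}"
    then show "xs \<in> Comp N j" using j unfolding Comp_def by (auto simp: sum_list_Suc)
  qed
  have "card (Comp N j) = card {l. length l = j \<and> sum_list l = N - j}"
    unfolding e by (rule card_image) (simp add: inj_on_def)
  also have "\<dots> = (N - j + j - 1) choose (N - j)" using card_length_sum_list[of j "N-j"] by simp
  also have "\<dots> = (N - 1) choose (N - j)" using j by simp
  also have "\<dots> = (N - 1) choose (N - 1 - (N - j))" using j by (intro binomial_symmetric) simp
  also have "N - 1 - (N - j) = j - 1" using j by simp
  finally show ?thesis .
qed

lemma finite_letter_UNIV: "finite (UNIV :: letter set)"
proof -
  have u: "UNIV = {U, S}" by (auto intro: letter.exhaust)
  show ?thesis by (subst u) (rule finite.insertI, rule finite.insertI, rule finite.emptyI)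
qed

lemma finite_words_le: "finite {w :: letter list. length w \<le> B}"
  using finite_lists_length_le[OF finite_letter_UNIV, of B] by simp


definition PW :: "nat \<Rightarrow> nat \<Rightarrow> letter list set" where
  "PW u v = {w. primitive_a_word w \<and> count_list w U = u \<and> count_list w S = v}"
definition AW :: "nat \<Rightarrow> nat \<Rightarrow> letter list set" where
  "AW u v = {w. a_word w \<and> count_list w U = u \<and> count_list w S = v}"
definition L :: "nat \<Rightarrow> nat \<Rightarrow> nat \<Rightarrow> letter list list set" where
  "L s N M = {As. length As = s \<and> (\<forall>A\<in>set As. primitive_a_word A) \<and>
     sum_list (map (\<lambda>A. count_list A U) As) = 3*N \<and> sum_list (map (\<lambda>A. count_list A S) As) = 2*M}"
definition JJ :: "nat list \<times> letter list list \<Rightarrow> letter list" where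
  "JJ p = join (snd p) (fst p)"
definition F :: "nat \<Rightarrow> nat \<Rightarrow> nat \<Rightarrow> nat \<Rightarrow> letter list set" where
  "F n m k s = JJ ` (Comp (3*k) (s-1) \<times> L s (n-k) m)"

lemma mem_le_sum: "x \<in> set xs \<Longrightarrow> (x::nat) \<le> sum_list xs"
  by (induction xs) auto

lemma finite_PW: "finite (PW u v)"
proof -
  have "PW u v \<subseteq> {w. length w \<le> u + v}" unfolding PW_def by (auto simp: length_counts)
  then show ?thesis using finite_words_le finite_subset by blast
qed

lemma finite_Comp: "finite (Comp N j)"
proof -
  have "Comp N j \<subseteq> {xs. set xs \<subseteq> {0..N} \<and> length xs = j}"
    unfolding Comp_def by (auto dest: mem_le_sum)
  then show ?thesis using finite_lists_length_eq[of "{0..N}" j] finite_subset by blast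
qed

lemma finite_L: "finite (L s N M)"
proof -
  have "L s N M \<subseteq> {As. set As \<subseteq> {w. length w \<le> 3*N + 2*M} \<and> length As = s}"
  proof
    fix As assume "As \<in> L s N M"
    then have h: "length As = s" "sum_list (map (\<lambda>A. count_list A U) As) = 3*N"
      "sum_list (map (\<lambda>A. count_list A S) As) = 2*M" unfolding L_def by auto
    have "\<forall>A\<in>set As. length A \<le> 3*N + 2*M"
    proof
      fix A assume "A \<in> set As"
      then have "count_list A U \<in> set (map (\<lambda>A. count_list A U) As)"
        "count_list A S \<in> set (map (\<lambda>A. count_list A S) As)" by auto
      then have "count_list A U \<le> 3*N" "count_list A S \<le> 2*M"
        using h(2,3) mem_le_sum by metis+
      then show "length A \<le> 3*N + 2*M" by (simp add: length_counts)
    qed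
    then show "As \<in> {As. set As \<subseteq> {w. length w \<le> 3*N + 2*M} \<and> length As = s}" using h by auto
  qed
  then show ?thesis using finite_lists_length_eq[OF finite_words_le] finite_subset by blast
qed

lemma finite_F: "finite (F n m k s)"
  unfolding F_def using finite_Comp finite_L by auto

lemma AW_decomp: "AW (3*n) (2*m) = PW (3*n) (2*m) \<union> (\<Union>k\<in>{1..n}. \<Union>s\<in>{2..3*k+1}. F n m k s)"
proof (intro set_eqI iffI)
  fix w assume "w \<in> AW (3*n) (2*m)"
  then have w: "a_word w" "count_list w U = 3*n" "count_list w S = 2*m" unfolding AW_def by auto
  obtain As gs where d: "dec As gs" "w = join As gs" using exists_dec[OF w(1)] by blast
  show "w \<in> PW (3*n) (2*m) \<union> (\<Union>k\<in>{1..n}. \<Union>s\<in>{2..3*k+1}. F n m k s)"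
  proof (cases "length As = 1")
    case True
    then obtain A where "As = [A]" by (cases As) auto
    then have "w = A" "primitive_a_word A" using d unfolding dec_def by auto
    then show ?thesis using w unfolding PW_def by auto
  next
    case False
    define s where "s = length As"
    have s2: "s \<ge> 2" using False d(1) unfolding dec_def s_def by (cases As) (auto simp: Suc_le_eq)
    have lg: "length gs = s - 1" "\<forall>g\<in>set gs. g \<ge> 1" using d(1) unfolding dec_def s_def by auto
    have "3 dvd sum_list gs" using dec_sum3 d w(1) by blast
    then obtain k where k: "sum_list gs = 3*k" by blast
    have "length gs \<le> sum_list gs" using length_le_sum lg(2) by blast
    then have sk: "s \<le> 3*k + 1" "k \<ge> 1" using lg(1) s2 k by linarith+
    have cU: "count_list w U = sum_list (map (\<lambda>A. count_list A U) As) + 3*k"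
      using join_count[of gs As U] d lg(1) k unfolding s_def by simp
    have cS: "count_list w S = sum_list (map (\<lambda>A. count_list A S) As)"
      using join_count[of gs As S] d lg(1) unfolding s_def by simp
    have kn: "k \<le> n" using cU w(2) by linarith
    have "gs \<in> Comp (3*k) (s-1)" unfolding Comp_def using lg k by simp
    moreover have "As \<in> L s (n-k) m" unfolding L_def using d(1) cU cS w(2,3) s_def kn
      by (auto simp: dec_def diff_mult_distrib2)
    ultimately have "w \<in> F n m k s" unfolding F_def JJ_def using d(2)
      by (auto intro!: image_eqI[of _ _ "(gs, As)"])
    then show ?thesis using kn sk s2 by auto
  qed
next
  fix w assume "w \<in> PW (3*n) (2*m) \<union> (\<Union>k\<in>{1..n}. \<Union>s\<in>{2..3*k+1}. F n m k s)"
  then show "w \<in> AW (3*n) (2*m)"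
  proof
    assume "w \<in> PW (3*n) (2*m)"
    then show ?thesis unfolding PW_def AW_def by (auto intro: prim_aw)
  next
    assume "w \<in> (\<Union>k\<in>{1..n}. \<Union>s\<in>{2..3*k+1}. F n m k s)"
    then obtain k s where k: "k \<in> {1..n}" "s \<in> {2..3*k+1}" "w \<in> F n m k s" by blast
    then obtain gs As where "gs \<in> Comp (3*k) (s-1)" "As \<in> L s (n-k) m" "w = join As gs"
      unfolding F_def JJ_def by auto
    then have ks: "1 \<le> k" "k \<le> n" "2 \<le> s" "gs \<in> Comp (3*k) (s-1)"
      "As \<in> L s (n-k) m" "w = join As gs" using k by auto
    have d: "dec As gs" using ks unfolding dec_def Comp_def L_def by auto
    have sg: "sum_list gs = 3*k" using ks(4) unfolding Comp_def by simp
    have "a_word w" using dec_aw[OF d] sg ks(6) by simp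
    moreover have "count_list w U = 3*n"
      using join_count[of gs As U] ks sg unfolding Comp_def L_def by (simp add: diff_mult_distrib2)
    moreover have "count_list w S = 2*m"
      using join_count[of gs As S] ks unfolding Comp_def L_def by simp
    ultimately show ?thesis unfolding AW_def by simp
  qed
qed

lemma F_elem: "w \<in> F n m k s \<Longrightarrow> 2 \<le> s \<Longrightarrow> \<exists>As gs. dec As gs \<and> w = join As gs \<and> length As = s \<and> sum_list gs = 3*k"
proof -
  assume h: "w \<in> F n m k s" "2 \<le> s"
  then obtain gs As where g: "gs \<in> Comp (3*k) (s-1)" "As \<in> L s (n-k) m" "w = join As gs"
    unfolding F_def JJ_def by auto
  have "As \<noteq> []" using g(2) h(2) unfolding L_def by auto
  then show ?thesis using g h(2) unfolding Comp_def L_def dec_def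
    by (intro exI[of _ As] exI[of _ gs]) auto
qed

lemma PW_F_disj: "2 \<le> s \<Longrightarrow> PW u v \<inter> F n m k s = {}"
proof (rule ccontr)
  assume s: "2 \<le> s" "PW u v \<inter> F n m k s \<noteq> {}"
  then obtain w where "w \<in> PW u v" "w \<in> F n m k s" by blast
  then obtain As gs where h: "primitive_a_word w" "dec As gs" "w = join As gs" "length As = s"
    using F_elem s(1) unfolding PW_def by blast
  then show False using s(1) unfolding primitive_a_word_def dec_def by (auto intro: prim_aw)
qed

lemma F_disj: "2 \<le> s \<Longrightarrow> 2 \<le> s' \<Longrightarrow> (k, s) \<noteq> (k', s') \<Longrightarrow> F n m k s \<inter> F n m k' s' = {}"
proof (rule ccontr)
  assume s: "2 \<le> s" "2 \<le> s'" "(k, s) \<noteq> (k', s')" "F n m k s \<inter> F n m k' s' \<noteq> {}"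
  then obtain w where "w \<in> F n m k s" "w \<in> F n m k' s'" by blast
  then obtain As gs Bs hs where h: "dec As gs" "w = join As gs" "length As = s" "sum_list gs = 3*k"
    "dec Bs hs" "w = join Bs hs" "length Bs = s'" "sum_list hs = 3*k'"
    using F_elem s(1,2) by metis
  then have "As = Bs \<and> gs = hs" using uniq by metis
  then show False using h s(3) by auto
qed

lemma card_F: "2 \<le> s \<Longrightarrow> card (F n m k s) = card (Comp (3*k) (s-1)) * card (L s (n-k) m)"
proof -
  assume s: "2 \<le> s"
  have "inj_on JJ (Comp (3*k) (s-1) \<times> L s (n-k) m)"
  proof (rule inj_onI)
    fix x y assume xy: "x \<in> Comp (3*k) (s-1) \<times> L s (n-k) m" "y \<in> Comp (3*k) (s-1) \<times> L s (n-k) m" "JJ x = JJ y"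
    have "dec (snd x) (fst x)" "dec (snd y) (fst y)" using xy(1,2) s
      unfolding dec_def Comp_def L_def by (auto simp: mem_Times_iff)
    then show "x = y" using uniq xy(3) unfolding JJ_def by (metis prod.expand)
  qed
  then show ?thesis unfolding F_def by (simp add: card_image card_cartesian_product)
qed

lemma card_AW: "card (AW (3*n) (2*m)) = card (PW (3*n) (2*m)) +
   (\<Sum>k\<in>{1..n}. \<Sum>s\<in>{2..3*k+1}. card (Comp (3*k) (s-1)) * card (L s (n-k) m))"
proof -
  have disj1: "PW (3*n) (2*m) \<inter> (\<Union>k\<in>{1..n}. \<Union>s\<in>{2..3*k+1}. F n m k s) = {}"
  proof (rule equals0I)
    fix w assume "w \<in> PW (3*n) (2*m) \<inter> (\<Union>k\<in>{1..n}. \<Union>s\<in>{2..3*k+1}. F n m k s)"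
    then obtain k s where "s \<in> {2..3*k+1}" "w \<in> F n m k s" "w \<in> PW (3*n) (2*m)" by blast
    then show False using PW_F_disj[of s "3*n" "2*m" n m k] by auto
  qed
  have fin2: "finite (\<Union>k\<in>{1..n}. \<Union>s\<in>{2..3*k+1}. F n m k s)" using finite_F by auto
  have "card (AW (3*n) (2*m)) = card (PW (3*n) (2*m)) + card (\<Union>k\<in>{1..n}. \<Union>s\<in>{2..3*k+1}. F n m k s)"
    unfolding AW_decomp by (rule card_Un_disjoint[OF finite_PW fin2 disj1])
  also have "card (\<Union>k\<in>{1..n}. \<Union>s\<in>{2..3*k+1}. F n m k s) =
      (\<Sum>k\<in>{1..n}. card (\<Union>s\<in>{2..3*k+1}. F n m k s))"
  proof (rule card_UN_disjoint)
    show "finite {1..n}" by simp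
    show "\<forall>k\<in>{1..n}. finite (\<Union>s\<in>{2..3*k+1}. F n m k s)" using finite_F by auto
    show "\<forall>k\<in>{1..n}. \<forall>k'\<in>{1..n}. k \<noteq> k' \<longrightarrow>
        (\<Union>s\<in>{2..3*k+1}. F n m k s) \<inter> (\<Union>s\<in>{2..3*k'+1}. F n m k' s) = {}"
    proof (intro ballI impI)
      fix k k' :: nat assume "k \<in> {1..n}" "k' \<in> {1..n}" and kk: "k \<noteq> k'"
      show "(\<Union>s\<in>{2..3*k+1}. F n m k s) \<inter> (\<Union>s\<in>{2..3*k'+1}. F n m k' s) = {}"
      proof (rule equals0I)
        fix w assume "w \<in> (\<Union>s\<in>{2..3*k+1}. F n m k s) \<inter> (\<Union>s\<in>{2..3*k'+1}. F n m k' s)"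
        then obtain s s' where "s \<in> {2..3*k+1}" "s' \<in> {2..3*k'+1}" "w \<in> F n m k s" "w \<in> F n m k' s'"
          by blast
        then show False using F_disj[of s s' k k' n m] kk by auto
      qed
    qed
  qed
  also have "\<dots> = (\<Sum>k\<in>{1..n}. \<Sum>s\<in>{2..3*k+1}. card (F n m k s))"
  proof (rule sum.cong[OF refl])
    fix k assume "k \<in> {1..n}"
    show "card (\<Union>s\<in>{2..3*k+1}. F n m k s) = (\<Sum>s\<in>{2..3*k+1}. card (F n m k s))"
    proof (rule card_UN_disjoint)
      show "finite {2..3*k+1}" by simp
      show "\<forall>s\<in>{2..3*k+1}. finite (F n m k s)" using finite_F by auto
      show "\<forall>s\<in>{2..3*k+1}. \<forall>s'\<in>{2..3*k+1}. s \<noteq> s' \<longrightarrow> F n m k s \<inter> F n m k s' = {}"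
      proof (intro ballI impI)
        fix s s' :: nat assume "s \<in> {2..3*k+1}" "s' \<in> {2..3*k+1}" "s \<noteq> s'"
        then show "F n m k s \<inter> F n m k s' = {}" using F_disj[of s s' k k n m] by auto
      qed
    qed
  qed
  also have "\<dots> = (\<Sum>k\<in>{1..n}. \<Sum>s\<in>{2..3*k+1}. card (Comp (3*k) (s-1)) * card (L s (n-k) m))"
    by (intro sum.cong refl) (simp add: card_F)
  finally show ?thesis .
qed


definition P :: "nat \<Rightarrow> nat \<Rightarrow> nat \<Rightarrow> (nat list \<times> nat list) set" where
  "P s N M = {(ns, ms). length ns = s \<and> length ms = s \<and> sum_list ns = N \<and> sum_list ms = M}"
definition Lp :: "nat \<Rightarrow> nat list \<times> nat list \<Rightarrow> letter list list set" where
  "Lp s p = {As. length As = s \<and> (\<forall>i<s. As ! i \<in> PW (3 * (fst p ! i)) (2 * (snd p ! i)))}"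

lemma sum_div: "\<forall>A\<in>set As. (c::nat) dvd f A \<Longrightarrow> sum_list (map f As) = c * sum_list (map (\<lambda>A. f A div c) As)"
  by (induction As) (auto simp: distrib_left)

lemma sum_nth: "sum_list (map f xs) = (\<Sum>i<length xs. f (xs ! i))"
proof (induction xs)
  case Nil then show ?case by simp
next
  case (Cons x xs)
  have "(\<Sum>i<Suc (length xs). f ((x#xs) ! i)) = f ((x#xs) ! 0) + (\<Sum>i<length xs. f ((x#xs) ! Suc i))"
    by (rule sum.lessThan_Suc_shift)
  then show ?case using Cons.IH by simp
qed

lemma finite_P: "finite (P s N M)"
proof -
  have "P s N M \<subseteq> {ns. set ns \<subseteq> {0..N} \<and> length ns = s} \<times> {ms. set ms \<subseteq> {0..M} \<and> length ms = s}"
    unfolding P_def by (auto dest: mem_le_sum)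
  then show ?thesis
    by (rule finite_subset) (intro finite_cartesian_product finite_lists_length_eq finite_atLeastAtMost)
qed

lemma L_eq: "L s N M = (\<Union>p\<in>P s N M. Lp s p)"
proof (intro set_eqI iffI)
  fix As assume "As \<in> L s N M"
  then have h: "length As = s" "\<forall>A\<in>set As. primitive_a_word A"
    "sum_list (map (\<lambda>A. count_list A U) As) = 3*N" "sum_list (map (\<lambda>A. count_list A S) As) = 2*M"
    unfolding L_def by auto
  have c: "\<forall>A\<in>set As. 3 dvd count_list A U" "\<forall>A\<in>set As. 2 dvd count_list A S"
    using h(2) prim_counts by (auto simp: mod_eq_0_iff_dvd)
  define ns where "ns = map (\<lambda>A. count_list A U div 3) As"
  define ms where "ms = map (\<lambda>A. count_list A S div 2) As"
  have "sum_list ns = N" using sum_div[OF c(1)] h(3) unfolding ns_def by simp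
  moreover have "sum_list ms = M" using sum_div[OF c(2)] h(4) unfolding ms_def by simp
  ultimately have "(ns, ms) \<in> P s N M" unfolding P_def ns_def ms_def using h(1) by simp
  moreover have "\<forall>i<s. As ! i \<in> PW (3 * (ns ! i)) (2 * (ms ! i))"
  proof (intro allI impI)
    fix i assume i: "i < s"
    then have Ai: "As ! i \<in> set As" using h(1) by simp
    have "3 dvd count_list (As ! i) U" "2 dvd count_list (As ! i) S" using c Ai by auto
    then show "As ! i \<in> PW (3 * (ns ! i)) (2 * (ms ! i))"
      using h(1,2) i Ai unfolding ns_def ms_def PW_def by simp
  qed
  then have "As \<in> Lp s (ns, ms)" unfolding Lp_def using h(1) by simp
  ultimately show "As \<in> (\<Union>p\<in>P s N M. Lp s p)" by blast
next
  fix As assume "As \<in> (\<Union>p\<in>P s N M. Lp s p)"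
  then obtain ns ms where p: "(ns, ms) \<in> P s N M" "As \<in> Lp s (ns, ms)" by auto
  then have h: "length As = s" "\<forall>i<s. As ! i \<in> PW (3 * (ns ! i)) (2 * (ms ! i))"
    "length ns = s" "length ms = s" "sum_list ns = N" "sum_list ms = M"
    unfolding Lp_def P_def by auto
  have "\<forall>A\<in>set As. primitive_a_word A" using h(1,2) unfolding PW_def by (auto simp: in_set_conv_nth)
  moreover have "sum_list (map (\<lambda>A. count_list A U) As) = 3*N"
  proof -
    have "sum_list (map (\<lambda>A. count_list A U) As) = (\<Sum>i<s. count_list (As ! i) U)"
      by (simp add: sum_nth h(1))
    also have "\<dots> = (\<Sum>i<s. 3 * (ns ! i))" using h(2) unfolding PW_def by simp
    also have "\<dots> = 3 * sum_list ns" using sum_nth[of "\<lambda>x. x" ns] h(3) by (simp add: sum_distrib_left)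
    finally show ?thesis using h(5) by simp
  qed
  moreover have "sum_list (map (\<lambda>A. count_list A S) As) = 2*M"
  proof -
    have "sum_list (map (\<lambda>A. count_list A S) As) = (\<Sum>i<s. count_list (As ! i) S)"
      by (simp add: sum_nth h(1))
    also have "\<dots> = (\<Sum>i<s. 2 * (ms ! i))" using h(2) unfolding PW_def by simp
    also have "\<dots> = 2 * sum_list ms" using sum_nth[of "\<lambda>x. x" ms] h(4) by (simp add: sum_distrib_left)
    finally show ?thesis using h(6) by simp
  qed
  ultimately show "As \<in> L s N M" unfolding L_def using h(1) by simp
qed

lemma Lp_disj: "p \<in> P s N M \<Longrightarrow> p' \<in> P s N M \<Longrightarrow> p \<noteq> p' \<Longrightarrow> Lp s p \<inter> Lp s p' = {}"
proof (rule ccontr)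
  assume h: "p \<in> P s N M" "p' \<in> P s N M" "p \<noteq> p'" "Lp s p \<inter> Lp s p' \<noteq> {}"
  then obtain As where As: "As \<in> Lp s p" "As \<in> Lp s p'" by blast
  obtain ns ms ns' ms' where pp: "p = (ns, ms)" "p' = (ns', ms')" by (cases p; cases p')
  have l: "length ns = s" "length ms = s" "length ns' = s" "length ms' = s"
    using h(1,2) pp unfolding P_def by auto
  have "\<forall>i<s. 3 * ns ! i = 3 * ns' ! i \<and> 2 * ms ! i = 2 * ms' ! i"
    using As pp unfolding Lp_def PW_def by auto
  then have "ns = ns'" "ms = ms'" using l by (auto intro: nth_equalityI)
  then show False using h(3) pp by simp
qed

lemma card_Lp: "card (Lp s p) = (\<Prod>i<s. pa_count (3 * (fst p ! i)) (2 * (snd p ! i)))"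
  unfolding Lp_def pa_count_def using card_lists_nth[of s "\<lambda>i. PW (3 * (fst p ! i)) (2 * (snd p ! i))"]
  unfolding PW_def by simp

lemma card_L: "card (L s N M) = (\<Sum>p\<in>P s N M. \<Prod>i<s. pa_count (3 * (fst p ! i)) (2 * (snd p ! i)))"
proof -
  have "card (L s N M) = (\<Sum>p\<in>P s N M. card (Lp s p))"
    unfolding L_eq
  proof (rule card_UN_disjoint)
    show "finite (P s N M)" by (rule finite_P)
    show "\<forall>p\<in>P s N M. finite (Lp s p)"
      using L_eq finite_L by (metis UN_upper finite_subset)
    show "\<forall>p\<in>P s N M. \<forall>p'\<in>P s N M. p \<noteq> p' \<longrightarrow> Lp s p \<inter> Lp s p' = {}"
      using Lp_disj by blast
  qed
  then show ?thesis by (simp add: card_Lp)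
qed

theorem proposition4:
  fixes n m :: nat
  shows "a_count (3*n) (2*m) =
    pa_count (3*n) (2*m) +
    (\<Sum>k\<in>{1..n}. \<Sum>s\<in>{2..3*k+1}. ((3*k - 1) choose (s - 2)) *
       (\<Sum>p\<in>{(ns, ms). length ns = s \<and> length ms = s \<and>
                        sum_list ns = n - k \<and> sum_list ms = m}.
          \<Prod>i<s. pa_count (3 * (fst p ! i)) (2 * (snd p ! i))))"
proof -
  have "a_count (3*n) (2*m) = card (AW (3*n) (2*m))" unfolding a_count_def AW_def by simp
  also have "\<dots> = card (PW (3*n) (2*m)) +
   (\<Sum>k\<in>{1..n}. \<Sum>s\<in>{2..3*k+1}. card (Comp (3*k) (s-1)) * card (L s (n-k) m))" by (rule card_AW)
  also have "\<dots> = pa_count (3*n) (2*m) +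
    (\<Sum>k\<in>{1..n}. \<Sum>s\<in>{2..3*k+1}. ((3*k - 1) choose (s - 2)) *
       (\<Sum>p\<in>P s (n-k) m. \<Prod>i<s. pa_count (3 * (fst p ! i)) (2 * (snd p ! i))))"
  proof -
    have "card (Comp (3*k) (s-1)) = (3*k - 1) choose (s - 2)" if "k \<in> {1..n}" "s \<in> {2..3*k+1}" for k s
    proof -
      have "card (Comp (3*k) (s-1)) = (3*k - 1) choose (s - 1 - 1)"
        using that by (intro card_Comp) auto
      then show ?thesis by (simp add: numeral_2_eq_2)
    qed
    then show ?thesis unfolding pa_count_def PW_def card_L
      by (intro arg_cong2[where f="(+)"] refl sum.cong) auto
  qed
  finally show ?thesis unfolding P_def .
qed


end
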